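(* Let $m\ge2$ be an integer and let $A$ be a left brace with $A^{(3)}=A^{m+1}=\{0\}$. Let $a\in A$, define $a_1=a$ and $a_{j+1}=a*a_j$ for $j\ge1$, and let $S$ be the subbrace of $A$ generated by $a$. For $1\le r\le m$ let \[S_r=\Bigl\{\sum_{k=r}^m t_ka_k\;\Big|\; t_k\in\mathbb{Z},\ r\le k\le m\Bigr\}.\] Then $S^r=S_r$ for all $1\le r\le m$, and $S^r=\{0\}$ for $r\ge m+1$. Here $S^r$ is computed inside the left brace $S$.
   Context: A left brace $(A,+,\cdot)$ is a set $A$ with two binary operations such that $(A,+)$ is an abelian group, $(A,\cdot)$ is a group, and $a(b+c)=ab-a+ac$ for all $a,b,c\in A$. In a left brace, $a*b=-a+ab-b$. For subsets $L,M\subseteq A$, $L*M$ is the subgroup of $(A,+)$ generated by $\{l*m\mid l\in L,m\in M\}$. Set $A^{(1)}=A$, $A^{(r+1)}=A^{(r)}*A$, and $A^1=A$, $A^{r+1}=A*A^r$ for $r\ge1$. A subbrace is a subset that is a subgroup of both $(A,+)$ and $(A,\cdot)$ (hence itself a left brace); the subbrace generated by $a$ is the intersection of all subbraces containing $a$. *)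

theory Defs
  imports "HOL-Algebra.Algebra"
begin

text \<open>A left brace is given by two monoid structures on the same carrier:
  P (the additive group, written multiplicatively in HOL-Algebra) and M (the multiplicative group).\<close>

definition left_brace :: "'a monoid \<Rightarrow> 'a monoid \<Rightarrow> bool" where
  "left_brace P M \<longleftrightarrow> carrier P = carrier M \<and> comm_group P \<and> group M \<and>
     (\<forall>a\<in>carrier P. \<forall>b\<in>carrier P. \<forall>c\<in>carrier P.
        a \<otimes>\<^bsub>M\<^esub> (b \<otimes>\<^bsub>P\<^esub> c)
          = ((a \<otimes>\<^bsub>M\<^esub> b) \<otimes>\<^bsub>P\<^esub> inv\<^bsub>P\<^esub> a) \<otimes>\<^bsub>P\<^esub> (a \<otimes>\<^bsub>M\<^esub> c))"

definition brace_star :: "'a monoid \<Rightarrow> 'a monoid \<Rightarrow> 'a \<Rightarrow> 'a \<Rightarrow> 'a" where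
  "brace_star P M a b = (inv\<^bsub>P\<^esub> a \<otimes>\<^bsub>P\<^esub> (a \<otimes>\<^bsub>M\<^esub> b)) \<otimes>\<^bsub>P\<^esub> inv\<^bsub>P\<^esub> b"

definition brace_prod :: "'a monoid \<Rightarrow> 'a monoid \<Rightarrow> 'a set \<Rightarrow> 'a set \<Rightarrow> 'a set" where
  "brace_prod P M L K = generate P {brace_star P M l k | l k. l \<in> L \<and> k \<in> K}"

text \<open>A^r (left series): A^1 = A, A^(r+1) = A * A^r. Index 0 is unused (set to A).\<close>
fun brace_power :: "'a monoid \<Rightarrow> 'a monoid \<Rightarrow> nat \<Rightarrow> 'a set" where
  "brace_power P M 0 = carrier P"
| "brace_power P M (Suc 0) = carrier P"
| "brace_power P M (Suc (Suc n)) = brace_prod P M (carrier P) (brace_power P M (Suc n))"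

text \<open>A^(r) (right series): A^(1) = A, A^(r+1) = A^(r) * A. Index 0 is unused (set to A).\<close>
fun brace_derived :: "'a monoid \<Rightarrow> 'a monoid \<Rightarrow> nat \<Rightarrow> 'a set" where
  "brace_derived P M 0 = carrier P"
| "brace_derived P M (Suc 0) = carrier P"
| "brace_derived P M (Suc (Suc n)) = brace_prod P M (brace_derived P M (Suc n)) (carrier P)"

definition subbrace :: "'a monoid \<Rightarrow> 'a monoid \<Rightarrow> 'a set \<Rightarrow> bool" where
  "subbrace P M B \<longleftrightarrow> subgroup B P \<and> subgroup B M"

definition subbrace_gen :: "'a monoid \<Rightarrow> 'a monoid \<Rightarrow> 'a \<Rightarrow> 'a set" where
  "subbrace_gen P M a = \<Inter>{B. subbrace P M B \<and> a \<in> B}"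

text \<open>a_1 = a, a_(j+1) = a * a_j (meaningful for j \<ge> 1)\<close>
definition brace_seq :: "'a monoid \<Rightarrow> 'a monoid \<Rightarrow> 'a \<Rightarrow> nat \<Rightarrow> 'a" where
  "brace_seq P M a j = ((brace_star P M a) ^^ (j - 1)) a"

end

theory Submission
  imports Defs
begin

locale lbr =
  fixes P (structure) and M :: "'a monoid"
  assumes lb: "left_brace P M"
begin

lemma cg: "comm_group P" using lb unfolding left_brace_def by auto
lemma gM: "group M" using lb unfolding left_brace_def by auto
lemma carM: "carrier M = carrier P" using lb unfolding left_brace_def by auto
lemma ax: "\<lbrakk>a \<in> carrier P; b \<in> carrier P; c \<in> carrier P\<rbrakk> \<Longrightarrow>
   a \<otimes>\<^bsub>M\<^esub> (b \<otimes> c) = ((a \<otimes>\<^bsub>M\<^esub> b) \<otimes> inv a) \<otimes> (a \<otimes>\<^bsub>M\<^esub> c)"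
  using lb unfolding left_brace_def by auto

sublocale comm_group P by (rule cg)

lemma canc1[simp]: "x \<in> carrier P \<Longrightarrow> y \<in> carrier P \<Longrightarrow> x \<otimes> (inv x \<otimes> y) = y"
  by (simp add: m_assoc[symmetric])
lemma canc2[simp]: "x \<in> carrier P \<Longrightarrow> y \<in> carrier P \<Longrightarrow> inv x \<otimes> (x \<otimes> y) = y"
  by (simp add: m_assoc[symmetric])

lemma canc3[simp]: "x \<in> carrier P \<Longrightarrow> y \<in> carrier P \<Longrightarrow> x \<otimes> (y \<otimes> inv x) = y"
  by (simp add: m_lcomm[of x y])

lemma Mclosed[simp]: "x \<in> carrier P \<Longrightarrow> y \<in> carrier P \<Longrightarrow> x \<otimes>\<^bsub>M\<^esub> y \<in> carrier P"
  using group.subgroup_self[OF gM] carM monoid.m_closed[OF group.is_monoid[OF gM]] by auto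

lemma oneM: "\<one>\<^bsub>M\<^esub> = \<one>"
proof -
  have o: "\<one>\<^bsub>M\<^esub> \<in> carrier P" using carM monoid.one_closed[OF group.is_monoid[OF gM]] by auto
  have l: "\<And>x. x \<in> carrier P \<Longrightarrow> \<one>\<^bsub>M\<^esub> \<otimes>\<^bsub>M\<^esub> x = x"
    using carM monoid.l_one[OF group.is_monoid[OF gM]] by auto
  have "\<one>\<^bsub>M\<^esub> \<otimes>\<^bsub>M\<^esub> (\<one> \<otimes> \<one>) = ((\<one>\<^bsub>M\<^esub> \<otimes>\<^bsub>M\<^esub> \<one>) \<otimes> inv \<one>\<^bsub>M\<^esub>) \<otimes> (\<one>\<^bsub>M\<^esub> \<otimes>\<^bsub>M\<^esub> \<one>)"
    using ax[OF o one_closed one_closed] .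
  hence "\<one> = inv \<one>\<^bsub>M\<^esub>" using l o by simp
  thus ?thesis using o by (metis inv_inv inv_one)
qed

definition lam where "lam x y = inv x \<otimes> (x \<otimes>\<^bsub>M\<^esub> y)"
definition star where "star x y = brace_star P M x y"

lemma lam_closed[simp]: "x \<in> carrier P \<Longrightarrow> y \<in> carrier P \<Longrightarrow> lam x y \<in> carrier P"
  unfolding lam_def by simp
lemma star_lam: "star x y = lam x y \<otimes> inv y"
  unfolding star_def brace_star_def lam_def by simp
lemma star_closed[simp]: "x \<in> carrier P \<Longrightarrow> y \<in> carrier P \<Longrightarrow> star x y \<in> carrier P"
  unfolding star_lam by simp
lemma lam_star: "x \<in> carrier P \<Longrightarrow> y \<in> carrier P \<Longrightarrow> lam x y = star x y \<otimes> y"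
  unfolding star_lam by (simp add: m_assoc)

lemma lam_add: "x \<in> carrier P \<Longrightarrow> y \<in> carrier P \<Longrightarrow> z \<in> carrier P \<Longrightarrow>
   lam x (y \<otimes> z) = lam x y \<otimes> lam x z"
  unfolding lam_def using ax by (simp add: m_ac)

lemma lam_hom: "x \<in> carrier P \<Longrightarrow> lam x \<in> hom P P"
  by (rule homI) (auto simp: lam_add)

lemma lam_inv: "x \<in> carrier P \<Longrightarrow> y \<in> carrier P \<Longrightarrow> lam x (inv y) = inv (lam x y)"
  using group_hom.hom_inv[of P P "lam x"] lam_hom by (simp add: group_hom_def group_hom_axioms_def is_group)

lemma multM: "x \<in> carrier P \<Longrightarrow> y \<in> carrier P \<Longrightarrow> x \<otimes>\<^bsub>M\<^esub> y = x \<otimes> lam x y"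
  unfolding lam_def by (simp add: m_assoc[symmetric])

lemma mM_assoc: "x \<in> carrier P \<Longrightarrow> y \<in> carrier P \<Longrightarrow> z \<in> carrier P \<Longrightarrow> 
  (x \<otimes>\<^bsub>M\<^esub> y) \<otimes>\<^bsub>M\<^esub> z = x \<otimes>\<^bsub>M\<^esub> (y \<otimes>\<^bsub>M\<^esub> z)"
  using monoid.m_assoc[OF group.is_monoid[OF gM]] carM by auto

lemma lam_mult: "x \<in> carrier P \<Longrightarrow> w \<in> carrier P \<Longrightarrow> z \<in> carrier P \<Longrightarrow>
   lam (x \<otimes>\<^bsub>M\<^esub> w) z = lam x (lam w z)"
proof -
  assume c: "x \<in> carrier P" "w \<in> carrier P" "z \<in> carrier P"
  have "lam x (lam w z) = lam x (inv w) \<otimes> lam x (w \<otimes>\<^bsub>M\<^esub> z)"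
    using c by (simp add: lam_def[of w z] lam_add)
  also have "\<dots> = inv (inv x \<otimes> (x \<otimes>\<^bsub>M\<^esub> w)) \<otimes> (inv x \<otimes> (x \<otimes>\<^bsub>M\<^esub> (w \<otimes>\<^bsub>M\<^esub> z)))"
    using c by (simp only: lam_inv) (simp add: lam_def)
  also have "\<dots> = inv (x \<otimes>\<^bsub>M\<^esub> w) \<otimes> ((x \<otimes>\<^bsub>M\<^esub> w) \<otimes>\<^bsub>M\<^esub> z)"
    using c by (simp add: inv_mult mM_assoc m_ac)
  finally show ?thesis unfolding lam_def by simp
qed


lemma star_add: "x \<in> carrier P \<Longrightarrow> y \<in> carrier P \<Longrightarrow> z \<in> carrier P \<Longrightarrow>
   star x (y \<otimes> z) = star x y \<otimes> star x z"
  unfolding star_lam by (simp add: lam_add inv_mult m_ac)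

lemma star_hom: "x \<in> carrier P \<Longrightarrow> star x \<in> hom P P"
  by (rule homI) (auto simp: star_add)

lemma gh_star: "x \<in> carrier P \<Longrightarrow> group_hom P P (star x)"
  using star_hom by (simp add: group_hom_def group_hom_axioms_def is_group)

lemma star_inv: "x \<in> carrier P \<Longrightarrow> y \<in> carrier P \<Longrightarrow> star x (inv y) = inv (star x y)"
  using group_hom.hom_inv[OF gh_star] by simp

lemma star_one[simp]: "x \<in> carrier P \<Longrightarrow> star x \<one> = \<one>"
  using group_hom.hom_one[OF gh_star] by simp

lemma star_one_left[simp]: "z \<in> carrier P \<Longrightarrow> star \<one> z = \<one>"
proof -
  assume z: "z \<in> carrier P"
  have "\<one> \<otimes>\<^bsub>M\<^esub> z = z" using oneM carM monoid.l_one[OF group.is_monoid[OF gM]] z by metis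
  thus ?thesis using z unfolding star_lam lam_def by simp
qed

lemma multM2: "x \<in> carrier P \<Longrightarrow> y \<in> carrier P \<Longrightarrow> x \<otimes>\<^bsub>M\<^esub> y = x \<otimes> star x y \<otimes> y"
  by (simp add: multM lam_star m_assoc)

lemma star_multM: "x \<in> carrier P \<Longrightarrow> w \<in> carrier P \<Longrightarrow> z \<in> carrier P \<Longrightarrow>
   star (x \<otimes>\<^bsub>M\<^esub> w) z = star x (star w z) \<otimes> star w z \<otimes> star x z"
proof -
  assume c: "x \<in> carrier P" "w \<in> carrier P" "z \<in> carrier P"
  have "star (x \<otimes>\<^bsub>M\<^esub> w) z = lam x (star w z \<otimes> z) \<otimes> inv z"
    using c by (simp add: star_lam[of "x \<otimes>\<^bsub>M\<^esub> w"] lam_mult lam_star[of w z])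
  also have "\<dots> = (star x (star w z) \<otimes> star w z) \<otimes> (star x z \<otimes> z) \<otimes> inv z"
    using c by (subst lam_add) (simp_all add: lam_star)
  also have "\<dots> = star x (star w z) \<otimes> star w z \<otimes> star x z"
    using c by (simp add: m_assoc)
  finally show ?thesis .
qed

definition A2 where "A2 = brace_prod P M (carrier P) (carrier P)"

lemma A2_sub: "A2 \<subseteq> carrier P"
  unfolding A2_def brace_prod_def by (rule generate_incl) (auto simp: star_def[symmetric])

lemma A2_subgroup: "subgroup A2 P"
  unfolding A2_def brace_prod_def by (rule generate_is_subgroup) (auto simp: star_def[symmetric])

lemma star_A2: "x \<in> carrier P \<Longrightarrow> y \<in> carrier P \<Longrightarrow> star x y \<in> A2"
  unfolding A2_def brace_prod_def star_def by (rule generate.incl) auto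

end

locale lbr3 = lbr +
  assumes d3: "brace_derived P M 3 = {\<one>\<^bsub>P\<^esub>}"
begin

lemma A2_kill: "v \<in> A2 \<Longrightarrow> z \<in> carrier P \<Longrightarrow> star v z = \<one>"
proof -
  assume v: "v \<in> A2" and z: "z \<in> carrier P"
  have "star v z \<in> brace_derived P M 3"
    unfolding numeral_3_eq_3 brace_derived.simps brace_prod_def star_def
    by (rule generate.incl) (use v z in \<open>auto simp: A2_def brace_prod_def\<close>)
  thus ?thesis using d3 by simp
qed

lemma A2_multM: "v \<in> A2 \<Longrightarrow> u \<in> carrier P \<Longrightarrow> v \<otimes>\<^bsub>M\<^esub> u = v \<otimes> u"
  using A2_sub by (simp add: multM2 A2_kill subset_iff)

lemma A2_absorb: "u \<in> carrier P \<Longrightarrow> v \<in> A2 \<Longrightarrow> c \<in> carrier P \<Longrightarrow> star (u \<otimes> v) c = star u c"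
proof -
  assume u: "u \<in> carrier P" and v: "v \<in> A2" and c: "c \<in> carrier P"
  have vc: "v \<in> carrier P" using v A2_sub by auto
  have "u \<otimes> v = v \<otimes>\<^bsub>M\<^esub> u" using A2_multM[OF v u] u vc m_comm by simp
  thus ?thesis using star_multM[OF vc u c] A2_kill[OF v] u c by simp
qed

lemma star_add_left: "x \<in> carrier P \<Longrightarrow> y \<in> carrier P \<Longrightarrow> c \<in> carrier P \<Longrightarrow>
   star (x \<otimes> y) c = star x (star y c) \<otimes> star y c \<otimes> star x c"
proof -
  assume x: "x \<in> carrier P" and y: "y \<in> carrier P" and c: "c \<in> carrier P"
  define b where "b = inv\<^bsub>M\<^esub> x \<otimes>\<^bsub>M\<^esub> (x \<otimes> y)"
  have ixM: "inv\<^bsub>M\<^esub> x \<in> carrier P" using x carM group.inv_closed[OF gM] by metis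
  have b: "b \<in> carrier P" unfolding b_def using ixM x y by simp
  have xb: "x \<otimes>\<^bsub>M\<^esub> b = x \<otimes> y" unfolding b_def
    using ixM x y mM_assoc[OF x ixM, of "x \<otimes> y"] group.r_inv[OF gM, of x] carM oneM
      monoid.l_one[OF group.is_monoid[OF gM], of "x \<otimes> y"] by simp
  have "x \<otimes> y = x \<otimes> (b \<otimes> star x b)" using xb multM2[OF x b] x b by (simp add: m_ac)
  hence yb: "y = b \<otimes> star x b" using x y b by simp
  have "star y c = star b c" using yb A2_absorb[OF b star_A2[OF x b] c] by simp
  thus ?thesis using star_multM[OF x b c] xb by simp
qed

lemma star_inv_left: "x \<in> carrier P \<Longrightarrow> c \<in> carrier P \<Longrightarrow>
   star (inv x) c = inv (star x c) \<otimes> inv (star (inv x) (star x c))"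
proof -
  assume x: "x \<in> carrier P" and c: "c \<in> carrier P"
  have "\<one> = star (inv x) (star x c) \<otimes> star x c \<otimes> star (inv x) c"
    using star_add_left[of "inv x" x c] x c by simp
  hence "star (inv x) c \<otimes> (star (inv x) (star x c) \<otimes> star x c) = \<one>"
    using x c by (simp add: m_comm[of "star (inv x) c"])
  hence "inv (star (inv x) (star x c) \<otimes> star x c) = star (inv x) c"
    by (rule inv_equality) (use x c in auto)
  thus ?thesis using x c by (simp add: inv_mult m_comm)
qed


lemma finprod_in_sub: "subgroup H P \<Longrightarrow> finite I \<Longrightarrow> (\<And>i. i \<in> I \<Longrightarrow> g i \<in> H) \<Longrightarrow> finprod P g I \<in> H"
proof -
  assume H: "subgroup H P"
  assume "finite I"
  thus "(\<And>i. i \<in> I \<Longrightarrow> g i \<in> H) \<Longrightarrow> finprod P g I \<in> H"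
  proof (induction I rule: finite_induct)
    case empty then show ?case using subgroup.one_closed[OF H] by simp
  next
    case (insert x F)
    have gc: "g \<in> insert x F \<rightarrow> carrier P" using insert.prems subgroup.mem_carrier[OF H] by auto
    have "finprod P g (insert x F) = g x \<otimes> finprod P g F"
      by (rule finprod_insert) (use insert gc in auto)
    thus ?case using insert subgroup.m_closed[OF H] by auto
  qed
qed

lemma gen_finprod:
  fixes I :: "nat set"
  assumes fin: "finite I" and fc: "\<And>i. i \<in> I \<Longrightarrow> f i \<in> carrier P"
  shows "generate P (f ` I) = {finprod P (\<lambda>k. f k [^] t k) I | t :: nat \<Rightarrow> int. True}"
    (is "_ = ?R")
proof
  have pic: "(\<lambda>k. f k [^] (t k :: int)) \<in> I \<rightarrow> carrier P" for t using fc by auto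
  have mul: "finprod P (\<lambda>k. f k [^] s k) I \<otimes> finprod P (\<lambda>k. f k [^] t k) I
     = finprod P (\<lambda>k. f k [^] (s k + t k)) I" for s t :: "nat \<Rightarrow> int"
  proof -
    have "finprod P (\<lambda>k. f k [^] s k) I \<otimes> finprod P (\<lambda>k. f k [^] t k) I
        = finprod P (\<lambda>k. f k [^] s k \<otimes> f k [^] t k) I"
      by (rule finprod_multf[symmetric]) (use pic in auto)
    also have "\<dots> = finprod P (\<lambda>k. f k [^] (s k + t k)) I"
      by (rule finprod_cong') (use pic fc in \<open>auto simp: int_pow_mult\<close>)
    finally show ?thesis .
  qed
  have RS: "subgroup ?R P"
  proof (rule subgroupI)
    show "?R \<subseteq> carrier P" using pic by auto
    show "?R \<noteq> {}" by auto
  next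
    fix x assume "x \<in> ?R"
    then obtain t :: "nat \<Rightarrow> int" where t: "x = finprod P (\<lambda>k. f k [^] t k) I" by blast
    have "finprod P (\<lambda>k. f k [^] (- t k)) I \<otimes> x = finprod P (\<lambda>k. f k [^] (0::int)) I"
      unfolding t mul by simp
    also have "\<dots> = \<one>" by simp
    finally have "inv x = finprod P (\<lambda>k. f k [^] (- t k)) I"
      by (rule inv_equality) (use t pic in auto)
    thus "inv x \<in> ?R" by auto
  next
    fix x y assume "x \<in> ?R" "y \<in> ?R"
    then obtain s t :: "nat \<Rightarrow> int" where "x = finprod P (\<lambda>k. f k [^] s k) I" "y = finprod P (\<lambda>k. f k [^] t k) I" by blast
    thus "x \<otimes> y \<in> ?R" using mul by auto
  qed
  show "generate P (f ` I) \<subseteq> ?R"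
  proof (rule generate_subgroup_incl[OF _ RS])
    show "f ` I \<subseteq> ?R"
    proof
      fix h assume "h \<in> f ` I"
      then obtain i where i: "i \<in> I" "h = f i" by auto
      have "finprod P (\<lambda>k. f k [^] (if k = i then 1 else 0 :: int)) I = finprod P (\<lambda>k. if i = k then f k else \<one>) I"
        by (rule finprod_cong') (use fc in auto)
      also have "\<dots> = f i" by (rule finprod_singleton) (use i fin fc in auto)
      finally show "h \<in> ?R" using i by (auto intro!: exI[of _ "\<lambda>k. if k = i then 1 else 0"])
    qed
  qed
  show "?R \<subseteq> generate P (f ` I)"
  proof
    fix x assume "x \<in> ?R"
    then obtain t :: "nat \<Rightarrow> int" where t: "x = finprod P (\<lambda>k. f k [^] t k) I" by blast
    have GS: "subgroup (generate P (f ` I)) P" by (rule generate_is_subgroup) (use fc in auto)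
    show "x \<in> generate P (f ` I)" unfolding t
      by (rule finprod_in_sub[OF GS fin]) (auto intro: subgroup_int_pow_closed[OF GS] generate.incl)
  qed
qed

lemma hom_gen: "f \<in> hom P P \<Longrightarrow> subgroup K P \<Longrightarrow> H \<subseteq> carrier P \<Longrightarrow> (\<And>h. h \<in> H \<Longrightarrow> f h \<in> K)
   \<Longrightarrow> y \<in> generate P H \<Longrightarrow> f y \<in> K"
proof -
  assume f: "f \<in> hom P P" and K: "subgroup K P" and H: "H \<subseteq> carrier P" and fh: "\<And>h. h \<in> H \<Longrightarrow> f h \<in> K"
  have gh: "group_hom P P f" using f by (simp add: group_hom_def group_hom_axioms_def is_group)
  assume "y \<in> generate P H"
  thus "f y \<in> K"
  proof (induction rule: generate.induct)
    case one thus ?case using group_hom.hom_one[OF gh] subgroup.one_closed[OF K] by simp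
  next
    case (incl h) thus ?case using fh by simp
  next
    case (inv h) thus ?case using group_hom.hom_inv[OF gh] fh H subgroup.m_inv_closed[OF K] by auto
  next
    case (eng h1 h2) thus ?case using group_hom.hom_mult[OF gh] generate_in_carrier[OF H] subgroup.m_closed[OF K] by auto
  qed
qed

end

locale lbrm = lbr3 +
  fixes m :: nat and a
  assumes m2: "m \<ge> 2" and pm: "brace_power P M (m + 1) = {\<one>\<^bsub>P\<^esub>}" and a: "a \<in> carrier P"
begin

definition sq where "sq k = brace_seq P M a k"
definition Sg where "Sg j = generate P (sq ` {j..m})"
definition good where "good x \<longleftrightarrow> (\<forall>j\<ge>1. \<forall>y\<in>Sg j. star x y \<in> Sg (Suc j))"

lemma sq_1[simp]: "sq (Suc 0) = a" unfolding sq_def brace_seq_def by simp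
lemma sq_0[simp]: "sq 0 = a" unfolding sq_def brace_seq_def by simp
lemma sq_Suc: "k \<ge> 1 \<Longrightarrow> sq (Suc k) = star a (sq k)"
  unfolding sq_def brace_seq_def star_def by (cases k) auto
lemma sq_closed[simp]: "sq k \<in> carrier P"
proof (induction k)
  case 0 then show ?case using a by simp
next
  case (Suc k) then show ?case using a by (cases k) (auto simp: sq_Suc)
qed
lemma sq_A2: "k \<ge> 2 \<Longrightarrow> sq k \<in> A2"
  by (cases k) (auto simp: sq_Suc star_A2 a)

lemma sq_power: "sq (Suc k) \<in> brace_power P M (Suc k)"
proof (induction k)
  case 0 then show ?case using a by simp
next
  case (Suc k)
  show ?case unfolding brace_power.simps brace_prod_def sq_Suc[of "Suc k", simplified]
    by (rule generate.incl) (use Suc a in \<open>auto simp: star_def\<close>)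
qed

lemma sq_triv: "k \<ge> m + 1 \<Longrightarrow> sq k = \<one>"
proof (induction k rule: dec_induct)
  case base then show ?case using sq_power[of m] pm by simp
next
  case (step n) then show ?case using m2 a by (simp add: sq_Suc)
qed

lemma Sg_sub: "Sg j \<subseteq> carrier P" unfolding Sg_def by (rule generate_incl) auto
lemma Sg_subgroup: "subgroup (Sg j) P" unfolding Sg_def by (rule generate_is_subgroup) auto
lemma Sg_mono: "i \<le> j \<Longrightarrow> Sg j \<subseteq> Sg i" unfolding Sg_def by (rule mono_generate) auto
lemma Sg_gen: "j \<le> k \<Longrightarrow> k \<le> m \<Longrightarrow> sq k \<in> Sg j" unfolding Sg_def by (rule generate.incl) auto
lemma Sg_triv: "m < j \<Longrightarrow> Sg j = {\<one>}"
proof -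
  assume "m < j"
  hence e: "sq ` {j..m} = {}" by auto
  have "generate P {} \<subseteq> {\<one>}" by (rule generate_subgroup_incl) (auto intro: triv_subgroup)
  thus ?thesis unfolding Sg_def e using generate.one[of P "{}"] by auto
qed
lemma Sg_one[simp]: "\<one> \<in> Sg j" using subgroup.one_closed[OF Sg_subgroup] .
lemma Sg_m: "x \<in> Sg j \<Longrightarrow> y \<in> Sg j \<Longrightarrow> x \<otimes> y \<in> Sg j" using subgroup.m_closed[OF Sg_subgroup] .
lemma Sg_inv: "x \<in> Sg j \<Longrightarrow> inv x \<in> Sg j" using subgroup.m_inv_closed[OF Sg_subgroup] .
lemma Sg_c: "x \<in> Sg j \<Longrightarrow> x \<in> carrier P" using Sg_sub by auto

lemma good_a: "good a"
  unfolding good_def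
proof (intro allI impI ballI)
  fix j y assume j: "1 \<le> j" and y: "y \<in> Sg j"
  show "star a y \<in> Sg (Suc j)"
  proof (rule hom_gen[OF star_hom[OF a] Sg_subgroup _ _ y[unfolded Sg_def]])
    show "sq ` {j..m} \<subseteq> carrier P" by auto
    fix h assume "h \<in> sq ` {j..m}"
    then obtain k where k: "k \<in> {j..m}" "h = sq k" by auto
    have "star a h = sq (Suc k)" using k j by (simp add: sq_Suc)
    thus "star a h \<in> Sg (Suc j)" using k Sg_gen[of "Suc j" "Suc k"] sq_triv[of "Suc k"]
      by (cases "Suc k \<le> m") auto
  qed
qed

lemma good_A2: "v \<in> A2 \<Longrightarrow> good v"
  unfolding good_def using A2_kill Sg_c by simp

lemma good_mult: "x \<in> carrier P \<Longrightarrow> y \<in> carrier P \<Longrightarrow> good x \<Longrightarrow> good y \<Longrightarrow> good (x \<otimes> y)"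
  unfolding good_def
proof (intro allI impI ballI)
  fix j c assume x: "x \<in> carrier P" and y: "y \<in> carrier P" and gx: "\<forall>j\<ge>1. \<forall>y\<in>Sg j. star x y \<in> Sg (Suc j)"
    and gy: "\<forall>j\<ge>1. \<forall>z\<in>Sg j. star y z \<in> Sg (Suc j)" and j: "1 \<le> j" and c: "c \<in> Sg j"
  have 1: "star y c \<in> Sg (Suc j)" using gy j c by auto
  have 2: "star x (star y c) \<in> Sg (Suc j)" using gx 1 j Sg_mono[of "Suc j" "Suc (Suc j)"] by auto
  have 3: "star x c \<in> Sg (Suc j)" using gx j c by auto
  show "star (x \<otimes> y) c \<in> Sg (Suc j)" using star_add_left[OF x y Sg_c[OF c]] 1 2 3 Sg_m by simp
qed

lemma good_inv: "x \<in> carrier P \<Longrightarrow> good x \<Longrightarrow> good (inv x)"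
proof -
  assume x: "x \<in> carrier P" and gx: "good x"
  have big: "\<forall>c\<in>Sg j. star (inv x) c \<in> Sg (Suc j)" if "j > m" for j
    using Sg_triv that x by auto
  have main: "1 \<le> j \<longrightarrow> (\<forall>c\<in>Sg j. star (inv x) c \<in> Sg (Suc j))" if j: "j \<le> m + 1" for j
    using j
  proof (induction j rule: inc_induct)
    case base then show ?case using big by simp
  next
    case (step n)
    show ?case
    proof (intro impI ballI)
      fix c assume n1: "1 \<le> n" and c: "c \<in> Sg n"
      have 1: "star x c \<in> Sg (Suc n)" using gx c n1 unfolding good_def by auto
      have 2: "star (inv x) (star x c) \<in> Sg (Suc n)"
        using step.IH 1 Sg_mono[of "Suc n" "Suc (Suc n)"] by auto
      show "star (inv x) c \<in> Sg (Suc n)" using star_inv_left[OF x Sg_c[OF c]] 1 2 Sg_m Sg_inv by simp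
    qed
  qed
  show "good (inv x)" unfolding good_def
  proof (intro allI impI)
    fix j :: nat assume "1 \<le> j"
    thus "\<forall>c\<in>Sg j. star (inv x) c \<in> Sg (Suc j)" using main[of j] big[of j] by (cases "j \<le> m + 1") auto
  qed
qed


lemma good_one: "good \<one>" unfolding good_def using Sg_c by simp

lemma Gd_subgroup: "subgroup {x \<in> carrier P. good x} P"
  by (rule subgroupI) (auto intro: good_one good_mult good_inv)

lemma T_good: "x \<in> Sg 1 \<Longrightarrow> good x"
proof -
  assume x: "x \<in> Sg 1"
  have "Sg 1 \<subseteq> {x \<in> carrier P. good x}" unfolding Sg_def
  proof (rule generate_subgroup_incl[OF _ Gd_subgroup])
    show "sq ` {1..m} \<subseteq> {x \<in> carrier P. good x}"
    proof
      fix h assume "h \<in> sq ` {1..m}"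
      then obtain k where k: "k \<in> {1..m}" "h = sq k" by auto
      show "h \<in> {x \<in> carrier P. good x}"
      proof (cases "k = 1")
        case True thus ?thesis using k good_a a by simp
      next
        case False thus ?thesis using k good_A2 sq_A2[of k] by auto
      qed
    qed
  qed
  thus ?thesis using x by auto
qed

lemma lam_surj: "x \<in> carrier P \<Longrightarrow> good x \<Longrightarrow> 1 \<le> j \<Longrightarrow> c \<in> Sg j \<Longrightarrow> \<exists>y\<in>Sg j. lam x y = c"
proof -
  assume x: "x \<in> carrier P" and gx: "good x"
  have big: "\<forall>c\<in>Sg j. \<exists>y\<in>Sg j. lam x y = c" if "j > m" for j
    using Sg_triv[OF that] x lam_star[OF x] by auto
  have main: "1 \<le> j \<longrightarrow> (\<forall>c\<in>Sg j. \<exists>y\<in>Sg j. lam x y = c)" if j: "j \<le> m + 1" for j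
    using j
  proof (induction j rule: inc_induct)
    case base then show ?case using big by simp
  next
    case (step n)
    show ?case
    proof (intro impI ballI)
      fix c assume n1: "1 \<le> n" and c: "c \<in> Sg n"
      have 1: "star x c \<in> Sg (Suc n)" using gx c n1 unfolding good_def by auto
      then obtain y1 where y1: "y1 \<in> Sg (Suc n)" "lam x y1 = star x c" using step.IH by auto
      have y1n: "y1 \<in> Sg n" using y1 Sg_mono[of n "Suc n"] by auto
      have "lam x (c \<otimes> inv y1) = c"
        using x Sg_c[OF c] Sg_c[OF y1n] y1(2) by (simp add: lam_add lam_inv lam_star[of x c] m_assoc)
      thus "\<exists>y\<in>Sg n. lam x y = c" using c y1n Sg_m Sg_inv by blast
    qed
  qed
  assume j: "1 \<le> j" and c: "c \<in> Sg j"
  show ?thesis using main[of j] big[of j] j c by (cases "j \<le> m + 1") auto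
qed

lemma T_subbrace: "subbrace P M (Sg 1)"
  unfolding subbrace_def
proof
  show "subgroup (Sg 1) P" by (rule Sg_subgroup)
  show "subgroup (Sg 1) M"
  proof
    show "Sg 1 \<subseteq> carrier M" using Sg_sub carM by simp
    show "\<one>\<^bsub>M\<^esub> \<in> Sg 1" using oneM by simp
  next
    fix x y assume x: "x \<in> Sg 1" and y: "y \<in> Sg 1"
    have "star x y \<in> Sg 2" using T_good[OF x] y unfolding good_def by (auto simp: numeral_2_eq_2)
    hence "star x y \<in> Sg 1" using Sg_mono[of 1 2] by auto
    thus "x \<otimes>\<^bsub>M\<^esub> y \<in> Sg 1" using multM2[OF Sg_c[OF x] Sg_c[OF y]] x y Sg_m by simp
  next
    fix x assume x: "x \<in> Sg 1"
    have xc: "x \<in> carrier P" using Sg_c[OF x] .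
    obtain y where y: "y \<in> Sg 1" "lam x y = inv x" using lam_surj[OF xc T_good[OF x] _ Sg_inv[OF x]] by auto
    have yc: "y \<in> carrier P" using Sg_c[OF y(1)] .
    have xy: "x \<otimes>\<^bsub>M\<^esub> y = \<one>\<^bsub>M\<^esub>" using multM[OF xc yc] y(2) xc oneM by simp
    have "inv\<^bsub>M\<^esub> x = y"
      using group.inv_equality[OF gM group.inv_comm[OF gM xy]] xc yc carM by simp
    thus "inv\<^bsub>M\<^esub> x \<in> Sg 1" using y by simp
  qed
qed

lemma T_min: "subbrace P M B \<Longrightarrow> a \<in> B \<Longrightarrow> Sg 1 \<subseteq> B"
proof -
  assume B: "subbrace P M B" and aB: "a \<in> B"
  have BP: "subgroup B P" and BM: "subgroup B M" using B unfolding subbrace_def by auto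
  have "sq k \<in> B" for k
  proof (induction k)
    case 0 then show ?case using aB by simp
  next
    case (Suc k)
    show ?case
    proof (cases k)
      case 0 then show ?thesis using aB by simp
    next
      case (Suc k')
      have "star a (sq k) \<in> B" unfolding star_def brace_star_def
        using Suc.IH aB subgroup.m_closed[OF BP] subgroup.m_inv_closed[OF BP] subgroup.m_closed[OF BM] by simp
      thus ?thesis using Suc by (simp add: sq_Suc)
    qed
  qed
  thus ?thesis unfolding Sg_def by (intro generate_subgroup_incl[OF _ BP]) auto
qed

lemma S_eq: "subbrace_gen P M a = Sg 1"
proof -
  have a1: "a \<in> Sg 1" using Sg_gen[of 1 1] m2 by simp
  show ?thesis unfolding subbrace_gen_def using T_subbrace T_min a1 by blast
qed


lemma Sg_finprod: "Sg r = {finprod P (\<lambda>k. sq k [^] t k) {r..m} | t :: nat \<Rightarrow> int. True}"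
  unfolding Sg_def by (rule gen_finprod) auto

abbreviation "P' \<equiv> P\<lparr>carrier := Sg 1\<rparr>"
abbreviation "M' \<equiv> M\<lparr>carrier := Sg 1\<rparr>"

lemma star': "x \<in> Sg 1 \<Longrightarrow> y \<in> Sg 1 \<Longrightarrow> brace_star P' M' x y = star x y"
  unfolding brace_star_def star_def using m_inv_consistent[OF Sg_subgroup] by simp

lemma pow_eq: "brace_power P' M' (Suc n) = Sg (Suc n)"
proof (induction n)
  case 0 then show ?case by simp
next
  case (Suc n)
  define XX where "XX = {star l k | l k. l \<in> Sg 1 \<and> k \<in> Sg (Suc n)}"
  have sub1: "Sg (Suc n) \<subseteq> Sg 1" by (rule Sg_mono) simp
  have XX2: "XX \<subseteq> Sg (Suc (Suc n))" unfolding XX_def using T_good unfolding good_def by auto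
  have XX1: "XX \<subseteq> Sg 1" using XX2 Sg_mono[of 1 "Suc (Suc n)"] by auto
  have XXc: "XX \<subseteq> carrier P" using XX1 Sg_sub by auto
  have "brace_power P' M' (Suc (Suc n)) = generate P' XX"
  proof -
    have "{brace_star P' M' l k | l k. l \<in> Sg 1 \<and> k \<in> Sg (Suc n)} = XX"
    proof -
      have e: "\<And>l k. l \<in> Sg 1 \<Longrightarrow> k \<in> Sg (Suc n) \<Longrightarrow> brace_star P' M' l k = star l k"
        using sub1 star' by auto
      show ?thesis unfolding XX_def
      proof (intro equalityI subsetI)
        fix x assume "x \<in> {brace_star P' M' l k | l k. l \<in> Sg 1 \<and> k \<in> Sg (Suc n)}"
        then obtain l k where "l \<in> Sg 1" "k \<in> Sg (Suc n)" "x = brace_star P' M' l k" by blast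
        thus "x \<in> {star l k | l k. l \<in> Sg 1 \<and> k \<in> Sg (Suc n)}" using e by auto
      next
        fix x assume "x \<in> {star l k | l k. l \<in> Sg 1 \<and> k \<in> Sg (Suc n)}"
        then obtain l k where "l \<in> Sg 1" "k \<in> Sg (Suc n)" "x = star l k" by blast
        thus "x \<in> {brace_star P' M' l k | l k. l \<in> Sg 1 \<and> k \<in> Sg (Suc n)}" using e by force
      qed
    qed
    thus ?thesis unfolding brace_power.simps brace_prod_def Suc by simp
  qed
  also have "\<dots> = generate P XX" by (rule generate_consistent[OF XX1 Sg_subgroup])
  also have "\<dots> = Sg (Suc (Suc n))"
  proof
    show "generate P XX \<subseteq> Sg (Suc (Suc n))" by (rule generate_subgroup_incl[OF XX2 Sg_subgroup])
    show "Sg (Suc (Suc n)) \<subseteq> generate P XX" unfolding Sg_def[of "Suc (Suc n)"]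
    proof (rule generate_subgroup_incl[OF _ generate_is_subgroup[OF XXc]])
      show "sq ` {Suc (Suc n)..m} \<subseteq> generate P XX"
      proof
        fix h assume "h \<in> sq ` {Suc (Suc n)..m}"
        then obtain k where k: "k \<in> {Suc (Suc n)..m}" "h = sq k" by auto
        then obtain k' where k': "k = Suc k'" by (cases k) auto
        have "h = star a (sq k')" using k k' by (simp add: sq_Suc)
        moreover have "a \<in> Sg 1" using Sg_gen[of 1 1] m2 by simp
        moreover have "sq k' \<in> Sg (Suc n)" using k k' by (intro Sg_gen) auto
        ultimately have "h \<in> XX" unfolding XX_def by auto
        thus "h \<in> generate P XX" by (rule generate.incl)
      qed
    qed
  qed
  finally show ?case .
qed

end

theorem mainTheorem14:
  fixes P M :: "'a monoid" and m :: nat and a :: 'a and S :: "'a set"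
  assumes "left_brace P M"
    and "m \<ge> 2"
    and "brace_derived P M 3 = {\<one>\<^bsub>P\<^esub>}"
    and "brace_power P M (m + 1) = {\<one>\<^bsub>P\<^esub>}"
    and "a \<in> carrier P"
    and "S = subbrace_gen P M a"
  shows "(\<forall>r\<in>{1..m}. brace_power (P\<lparr>carrier := S\<rparr>) (M\<lparr>carrier := S\<rparr>) r
            = {finprod P (\<lambda>k. brace_seq P M a k [^]\<^bsub>P\<^esub> (t k)) {r..m} | t :: nat \<Rightarrow> int. True})
       \<and> (\<forall>r\<ge>m + 1. brace_power (P\<lparr>carrier := S\<rparr>) (M\<lparr>carrier := S\<rparr>) r = {\<one>\<^bsub>P\<^esub>})"
proof -
  interpret L: lbrm P M m a
    using assms by (unfold_locales) auto
  have S: "S = L.Sg 1" using assms(6) L.S_eq by simp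
  have pw: "brace_power (P\<lparr>carrier := S\<rparr>) (M\<lparr>carrier := S\<rparr>) r = L.Sg r" if "r \<ge> 1" for r
    using L.pow_eq[of "r - 1"] that S by simp
  show ?thesis
  proof (intro conjI ballI allI impI)
    fix r assume "r \<in> {1..m}"
    thus "brace_power (P\<lparr>carrier := S\<rparr>) (M\<lparr>carrier := S\<rparr>) r
            = {finprod P (\<lambda>k. brace_seq P M a k [^]\<^bsub>P\<^esub> (t k)) {r..m} | t :: nat \<Rightarrow> int. True}"
      using pw[of r] L.Sg_finprod[of r] unfolding L.sq_def by simp
  next
    fix r :: nat assume "r \<ge> m + 1"
    thus "brace_power (P\<lparr>carrier := S\<rparr>) (M\<lparr>carrier := S\<rparr>) r = {\<one>\<^bsub>P\<^esub>}"
      using pw[of r] L.Sg_triv[of r] by simp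
  qed
qed

end
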